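(* Let $(A,\cdot,\circ)$ be a skew brace and $B$, $C$ sub-skew braces with $A = B\cdot C$. If $B$ is a trivial skew brace, then $B*C$ is a normal subgroup of $(A,\cdot)$.
   Context: A skew brace is a set $A$ with two group operations $\cdot$ (often written by juxtaposition) and $\circ$ such that $a\circ(bc) = (a\circ b)\,a^{-1}\,(a\circ c)$ for all $a,b,c\in A$. $a^{-1}$ denotes the inverse in $(A,\cdot)$. Define $a*b = a^{-1}(a\circ b)b^{-1}$; $B*C$ is the subgroup of $(A,\cdot)$ generated by all $b*c$, $b\in B$, $c\in C$. A sub-skew brace is a subset that is a subgroup of both groups; it is trivial if $a\circ b=ab$ for all its elements $a,b$. $A=B\cdot C$ means every element of $A$ is $bc$ with $b\in B$, $c\in C$. *)

theory Defs
  imports "HOL-Algebra.Algebra"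
begin

text \<open>A skew brace on the common carrier of two groups: G = (A, \<cdot>) and H = (A, \<circ>).\<close>
definition skew_brace :: "('a, 'm) monoid_scheme \<Rightarrow> ('a, 'n) monoid_scheme \<Rightarrow> bool" where
  "skew_brace G H \<longleftrightarrow> group G \<and> group H \<and> carrier H = carrier G \<and>
     (\<forall>a\<in>carrier G. \<forall>b\<in>carrier G. \<forall>c\<in>carrier G.
        a \<otimes>\<^bsub>H\<^esub> (b \<otimes>\<^bsub>G\<^esub> c)
          = (a \<otimes>\<^bsub>H\<^esub> b) \<otimes>\<^bsub>G\<^esub> inv\<^bsub>G\<^esub> a \<otimes>\<^bsub>G\<^esub> (a \<otimes>\<^bsub>H\<^esub> c))"

definition brace_star :: "('a, 'm) monoid_scheme \<Rightarrow> ('a, 'n) monoid_scheme \<Rightarrow> 'a \<Rightarrow> 'a \<Rightarrow> 'a" where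
  "brace_star G H a b = inv\<^bsub>G\<^esub> a \<otimes>\<^bsub>G\<^esub> (a \<otimes>\<^bsub>H\<^esub> b) \<otimes>\<^bsub>G\<^esub> inv\<^bsub>G\<^esub> b"

definition brace_star_set :: "('a, 'm) monoid_scheme \<Rightarrow> ('a, 'n) monoid_scheme \<Rightarrow> 'a set \<Rightarrow> 'a set \<Rightarrow> 'a set" where
  "brace_star_set G H B C = generate G {brace_star G H b c | b c. b \<in> B \<and> c \<in> C}"

definition sub_skew_brace :: "('a, 'm) monoid_scheme \<Rightarrow> ('a, 'n) monoid_scheme \<Rightarrow> 'a set \<Rightarrow> bool" where
  "sub_skew_brace G H B \<longleftrightarrow> subgroup B G \<and> subgroup B H"

definition trivial_on :: "('a, 'm) monoid_scheme \<Rightarrow> ('a, 'n) monoid_scheme \<Rightarrow> 'a set \<Rightarrow> bool" where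
  "trivial_on G H B \<longleftrightarrow> (\<forall>a\<in>B. \<forall>b\<in>B. a \<otimes>\<^bsub>H\<^esub> b = a \<otimes>\<^bsub>G\<^esub> b)"

end

theory Submission
  imports Defs
begin

lemma conj_generate:
  assumes "group G" and S: "S \<subseteq> carrier G" and x: "x \<in> carrier G"
    and gens: "\<And>s. s \<in> S \<Longrightarrow> x \<otimes>\<^bsub>G\<^esub> s \<otimes>\<^bsub>G\<^esub> inv\<^bsub>G\<^esub> x \<in> generate G S"
    and h: "h \<in> generate G S"
  shows "x \<otimes>\<^bsub>G\<^esub> h \<otimes>\<^bsub>G\<^esub> inv\<^bsub>G\<^esub> x \<in> generate G S"
proof -
  interpret G: group G by fact
  have canc: "\<And>a b. a \<in> carrier G \<Longrightarrow> b \<in> carrier G \<Longrightarrow> inv\<^bsub>G\<^esub> a \<otimes>\<^bsub>G\<^esub> (a \<otimes>\<^bsub>G\<^esub> b) = b"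
    by (simp add: G.m_assoc[symmetric])
  have sg: "subgroup (generate G S) G" using G.generate_is_subgroup[OF S] .
  have sub: "generate G S \<subseteq> carrier G" using sg subgroup.subset by blast
  show ?thesis using h
  proof (induction rule: generate.induct)
    case one
    then show ?case using x by (simp add: generate.one)
  next
    case (incl h)
    then show ?case using gens by blast
  next
    case (inv h)
    have hc: "h \<in> carrier G" using inv S by blast
    have "x \<otimes>\<^bsub>G\<^esub> inv\<^bsub>G\<^esub> h \<otimes>\<^bsub>G\<^esub> inv\<^bsub>G\<^esub> x
        = inv\<^bsub>G\<^esub> (x \<otimes>\<^bsub>G\<^esub> h \<otimes>\<^bsub>G\<^esub> inv\<^bsub>G\<^esub> x)"
      using hc x by (simp add: G.inv_mult_group G.m_assoc)
    then show ?case using gens[OF inv] subgroup.m_inv_closed[OF sg] by simp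
  next
    case (eng h1 h2)
    have c1: "h1 \<in> carrier G" "h2 \<in> carrier G" using eng.hyps sub by auto
    have "x \<otimes>\<^bsub>G\<^esub> (h1 \<otimes>\<^bsub>G\<^esub> h2) \<otimes>\<^bsub>G\<^esub> inv\<^bsub>G\<^esub> x
       = (x \<otimes>\<^bsub>G\<^esub> h1 \<otimes>\<^bsub>G\<^esub> inv\<^bsub>G\<^esub> x) \<otimes>\<^bsub>G\<^esub> (x \<otimes>\<^bsub>G\<^esub> h2 \<otimes>\<^bsub>G\<^esub> inv\<^bsub>G\<^esub> x)"
      using c1 x by (simp add: G.m_assoc canc)
    then show ?case using eng.IH subgroup.m_closed[OF sg] by simp
  qed
qed

theorem proposition3p1:
  fixes G :: "('a, 'm) monoid_scheme" and H :: "('a, 'n) monoid_scheme" and B C :: "'a set"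
  assumes "skew_brace G H"
    and "sub_skew_brace G H B" and "sub_skew_brace G H C"
    and "carrier G = B <#>\<^bsub>G\<^esub> C"
    and "trivial_on G H B"
  shows "brace_star_set G H B C \<lhd> G"
proof -
  interpret G: group G using assms(1) unfolding skew_brace_def by blast
  interpret H: group H using assms(1) unfolding skew_brace_def by blast
  have canc: "\<And>a b. a \<in> carrier G \<Longrightarrow> b \<in> carrier G \<Longrightarrow> inv\<^bsub>G\<^esub> a \<otimes>\<^bsub>G\<^esub> (a \<otimes>\<^bsub>G\<^esub> b) = b"
    "\<And>a b. a \<in> carrier G \<Longrightarrow> b \<in> carrier G \<Longrightarrow> a \<otimes>\<^bsub>G\<^esub> (inv\<^bsub>G\<^esub> a \<otimes>\<^bsub>G\<^esub> b) = b"
    by (simp_all add: G.m_assoc[symmetric])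
  have cH: "carrier H = carrier G" using assms(1) unfolding skew_brace_def by blast
  have br: "\<And>a b c. a \<in> carrier G \<Longrightarrow> b \<in> carrier G \<Longrightarrow> c \<in> carrier G \<Longrightarrow>
        a \<otimes>\<^bsub>H\<^esub> (b \<otimes>\<^bsub>G\<^esub> c)
          = (a \<otimes>\<^bsub>H\<^esub> b) \<otimes>\<^bsub>G\<^esub> inv\<^bsub>G\<^esub> a \<otimes>\<^bsub>G\<^esub> (a \<otimes>\<^bsub>H\<^esub> c)"
    using assms(1) unfolding skew_brace_def by blast
  have Bs: "subgroup B G" and Cs: "subgroup C G"
    using assms(2,3) unfolding sub_skew_brace_def by auto
  have BG: "B \<subseteq> carrier G" and CG: "C \<subseteq> carrier G"
    using Bs Cs subgroup.subset by blast+
  have triv: "\<And>a b. a \<in> B \<Longrightarrow> b \<in> B \<Longrightarrow> a \<otimes>\<^bsub>H\<^esub> b = a \<otimes>\<^bsub>G\<^esub> b"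
    using assms(5) unfolding trivial_on_def by blast
  have Hc: "\<And>a b. a \<in> carrier G \<Longrightarrow> b \<in> carrier G \<Longrightarrow> a \<otimes>\<^bsub>H\<^esub> b \<in> carrier G"
    using H.m_closed cH by auto
  define S where "S = {brace_star G H b c | b c. b \<in> B \<and> c \<in> C}"
  define N where "N = generate G S"
  have SG: "S \<subseteq> carrier G"
    unfolding S_def brace_star_def using BG CG Hc by blast
  have sg: "subgroup N G" unfolding N_def using G.generate_is_subgroup[OF SG] .
  have NG: "N \<subseteq> carrier G" using sg subgroup.subset by blast
  have SN: "S \<subseteq> N" unfolding N_def by (auto intro: generate.incl)
  have decomp: "\<And>x. x \<in> carrier G \<Longrightarrow> \<exists>b c. b \<in> B \<and> c \<in> C \<and> x = b \<otimes>\<^bsub>G\<^esub> c"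
    using assms(4) unfolding set_mult_def by blast
  have conjC: "\<And>c h. c \<in> C \<Longrightarrow> h \<in> N \<Longrightarrow> c \<otimes>\<^bsub>G\<^esub> h \<otimes>\<^bsub>G\<^esub> inv\<^bsub>G\<^esub> c \<in> N"
  proof -
    fix c h assume c: "c \<in> C" and h: "h \<in> N"
    have cc: "c \<in> carrier G" using c CG by blast
    show "c \<otimes>\<^bsub>G\<^esub> h \<otimes>\<^bsub>G\<^esub> inv\<^bsub>G\<^esub> c \<in> N"
      unfolding N_def
    proof (rule conj_generate[OF G.is_group SG cc _ h[unfolded N_def]])
      fix s assume "s \<in> S"
      then obtain b c' where b: "b \<in> B" and c': "c' \<in> C" and s: "s = brace_star G H b c'"
        unfolding S_def by blast
      have bc: "b \<in> carrier G" "c' \<in> carrier G" using b c' BG CG by auto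
      have e: "c \<otimes>\<^bsub>G\<^esub> s \<otimes>\<^bsub>G\<^esub> inv\<^bsub>G\<^esub> c
          = inv\<^bsub>G\<^esub> (brace_star G H b c) \<otimes>\<^bsub>G\<^esub> brace_star G H b (c \<otimes>\<^bsub>G\<^esub> c')"
        unfolding s brace_star_def using bc cc Hc
        by (simp add: br G.inv_mult_group G.m_assoc canc)
      have "brace_star G H b c \<in> N" "brace_star G H b (c \<otimes>\<^bsub>G\<^esub> c') \<in> N"
        using SN b c c' subgroup.m_closed[OF Cs] unfolding S_def by blast+
      then show "c \<otimes>\<^bsub>G\<^esub> s \<otimes>\<^bsub>G\<^esub> inv\<^bsub>G\<^esub> c \<in> generate G S"
        unfolding e N_def[symmetric]
        using subgroup.m_closed[OF sg] subgroup.m_inv_closed[OF sg] by blast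
    qed
  qed
  have conjB: "\<And>b h. b \<in> B \<Longrightarrow> h \<in> N \<Longrightarrow> b \<otimes>\<^bsub>G\<^esub> h \<otimes>\<^bsub>G\<^esub> inv\<^bsub>G\<^esub> b \<in> N"
  proof -
    fix b h assume b: "b \<in> B" and h: "h \<in> N"
    have bcar: "b \<in> carrier G" using b BG by blast
    show "b \<otimes>\<^bsub>G\<^esub> h \<otimes>\<^bsub>G\<^esub> inv\<^bsub>G\<^esub> b \<in> N"
      unfolding N_def
    proof (rule conj_generate[OF G.is_group SG bcar _ h[unfolded N_def]])
      fix s assume "s \<in> S"
      then obtain b1 c where b1: "b1 \<in> B" and c: "c \<in> C" and s: "s = brace_star G H b1 c"
        unfolding S_def by blast
      have cs: "b1 \<in> carrier G" "c \<in> carrier G" using b1 c BG CG by auto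
      have "inv\<^bsub>G\<^esub> (b \<otimes>\<^bsub>G\<^esub> c) \<in> carrier G" using bcar cs by simp
      then obtain b' c' where b': "b' \<in> B" and c': "c' \<in> C"
        and dec: "inv\<^bsub>G\<^esub> (b \<otimes>\<^bsub>G\<^esub> c) = b' \<otimes>\<^bsub>G\<^esub> c'"
        using decomp by blast
      have cs2: "b' \<in> carrier G" "c' \<in> carrier G" using b' c' BG CG by auto
      define c2 where "c2 = inv\<^bsub>G\<^esub> c'"
      define b2 where "b2 = inv\<^bsub>G\<^esub> b'"
      have c2: "c2 \<in> C" unfolding c2_def using c' subgroup.m_inv_closed[OF Cs] by blast
      have b2: "b2 \<in> B" unfolding b2_def using b' subgroup.m_inv_closed[OF Bs] by blast
      have cs3: "b2 \<in> carrier G" "c2 \<in> carrier G" using b2 c2 BG CG by auto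
      have bc_eq: "b \<otimes>\<^bsub>G\<^esub> c = c2 \<otimes>\<^bsub>G\<^esub> b2"
      proof -
        have "b \<otimes>\<^bsub>G\<^esub> c = inv\<^bsub>G\<^esub> (b' \<otimes>\<^bsub>G\<^esub> c')"
          using dec bcar cs by (metis G.inv_inv G.m_closed)
        then show ?thesis unfolding c2_def b2_def using cs2 by (simp add: G.inv_mult_group)
      qed
      have e1: "b \<otimes>\<^bsub>G\<^esub> s \<otimes>\<^bsub>G\<^esub> inv\<^bsub>G\<^esub> b = brace_star G H b1 (b \<otimes>\<^bsub>G\<^esub> c)"
        unfolding s brace_star_def using bcar cs Hc triv[OF b1 b]
        by (simp add: br G.inv_mult_group G.m_assoc canc)
      have e2: "brace_star G H b1 (c2 \<otimes>\<^bsub>G\<^esub> b2) = brace_star G H b1 c2"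
        unfolding brace_star_def using cs3 cs Hc triv[OF b1 b2]
        by (simp add: br G.inv_mult_group G.m_assoc canc)
      have "brace_star G H b1 c2 \<in> S" unfolding S_def using b1 c2 by blast
      then show "b \<otimes>\<^bsub>G\<^esub> s \<otimes>\<^bsub>G\<^esub> inv\<^bsub>G\<^esub> b \<in> generate G S"
        unfolding e1 bc_eq e2 by (rule generate.incl)
    qed
  qed
  have "\<forall>x\<in>carrier G. \<forall>h\<in>N. x \<otimes>\<^bsub>G\<^esub> h \<otimes>\<^bsub>G\<^esub> inv\<^bsub>G\<^esub> x \<in> N"
  proof (intro ballI)
    fix x h assume x: "x \<in> carrier G" and h: "h \<in> N"
    obtain b c where b: "b \<in> B" and c: "c \<in> C" and xe: "x = b \<otimes>\<^bsub>G\<^esub> c"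
      using decomp[OF x] by blast
    have cs: "b \<in> carrier G" "c \<in> carrier G" "h \<in> carrier G" using b c h BG CG NG by auto
    have "x \<otimes>\<^bsub>G\<^esub> h \<otimes>\<^bsub>G\<^esub> inv\<^bsub>G\<^esub> x
        = b \<otimes>\<^bsub>G\<^esub> (c \<otimes>\<^bsub>G\<^esub> h \<otimes>\<^bsub>G\<^esub> inv\<^bsub>G\<^esub> c) \<otimes>\<^bsub>G\<^esub> inv\<^bsub>G\<^esub> b"
      unfolding xe using cs by (simp add: G.inv_mult_group G.m_assoc canc)
    then show "x \<otimes>\<^bsub>G\<^esub> h \<otimes>\<^bsub>G\<^esub> inv\<^bsub>G\<^esub> x \<in> N"
      using conjB[OF b conjC[OF c h]] by simp
  qed
  then show ?thesis
    unfolding brace_star_set_def N_def[symmetric] S_def[symmetric]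
    using G.normal_inv_iff sg by blast
qed

end
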